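(* For every $\ell \in \mathbb{N}$ and every $k$-tree $G$ there exists a $k$-tree $\bar{G}$ such that every $\ell$-local book embedding of $\bar{G}$ contains a forest embedding of $G$.
   Context: All graphs are finite and simple; $k \ge 1$ is an integer. A graph is a $k$-tree if it is isomorphic to $K_{k+1}$, or it is obtained from a smaller $k$-tree $G'$ by adding one new vertex whose neighborhood in $G'$ is a clique of order $k$. A linear embedding of $G=(V,E)$ is a pair $(\prec,\mathcal{P})$ where $\prec$ is a total ordering of $V$ and $\mathcal{P}$ is a partition of $E$ into parts called pages. Two edges $uv, xy$ with $u\prec v$, $x \prec y$ cross if $u \prec x \prec v \prec y$ or $x \prec u \prec y \prec v$. A book embedding is a linear embedding in which no two crossing edges lie on the same page. For a book embedding and a vertex $v$, $\mathcal{P}_v$ is the set of pages containing an edge incident to $v$; the embedding is $\ell$-local if $|\mathcal{P}_v| \le \ell$ for all $v$. A linear embedding is a forest embedding if the edges on each page form a forest. A book embedding $(\prec,\mathcal{P})$ of a graph $\bar G = (\bar V, \bar E)$ contains a forest embedding of $G$ if there is a set $X \subseteq \bar V$ with $G \cong \bar G[X]$ such that the restriction of $(\prec,\mathcal{P})$ to $\bar G[X]$ (the ordering $\prec$ restricted to $X$ and the partition of $E(\bar G[X])$ induced by the pages) is a forest embedding of $\bar G[X]$. *)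

theory Defs
  imports Main
begin

(* A finite simple graph is given by a vertex set V and an edge set E of
   2-element subsets of V. *)

inductive ktree :: "nat \<Rightarrow> 'a set \<Rightarrow> 'a set set \<Rightarrow> bool" for k :: nat where
  base: "\<lbrakk> finite V; card V = k + 1 \<rbrakk> \<Longrightarrow>
           ktree k V {e. \<exists>u v. e = {u, v} \<and> u \<noteq> v \<and> u \<in> V \<and> v \<in> V}"
| step: "\<lbrakk> ktree k V E; w \<notin> V; C \<subseteq> V; card C = k;
           \<forall>u\<in>C. \<forall>v\<in>C. u \<noteq> v \<longrightarrow> {u, v} \<in> E \<rbrakk> \<Longrightarrow>
           ktree k (insert w V) (E \<union> {{w, c} | c. c \<in> C})"

definition crossing :: "'a rel \<Rightarrow> 'a set \<Rightarrow> 'a set \<Rightarrow> bool" where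
  "crossing R e f \<longleftrightarrow> (\<exists>u v x y. e = {u, v} \<and> f = {x, y} \<and> (u, v) \<in> R \<and> (x, y) \<in> R \<and>
      (((u, x) \<in> R \<and> (x, v) \<in> R \<and> (v, y) \<in> R) \<or>
       ((x, u) \<in> R \<and> (u, y) \<in> R \<and> (y, v) \<in> R)))"

(* A linear embedding: a strict total order R on V together with a page
   assignment p of the edges (the pages are the classes of the partition
   of E induced by p). *)
definition linear_embedding :: "'a set \<Rightarrow> 'a set set \<Rightarrow> 'a rel \<Rightarrow> ('a set \<Rightarrow> nat) \<Rightarrow> bool" where
  "linear_embedding V E R p \<longleftrightarrow> strict_linear_order_on V R \<and> R \<subseteq> V \<times> V"

definition book_embedding :: "'a set \<Rightarrow> 'a set set \<Rightarrow> 'a rel \<Rightarrow> ('a set \<Rightarrow> nat) \<Rightarrow> bool" where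
  "book_embedding V E R p \<longleftrightarrow> linear_embedding V E R p \<and>
     (\<forall>e\<in>E. \<forall>f\<in>E. p e = p f \<longrightarrow> \<not> crossing R e f)"

definition pages_at :: "'a set set \<Rightarrow> ('a set \<Rightarrow> nat) \<Rightarrow> 'a \<Rightarrow> nat set" where
  "pages_at E p v = p ` {e\<in>E. v \<in> e}"

definition local_embedding :: "nat \<Rightarrow> 'a set \<Rightarrow> 'a set set \<Rightarrow> ('a set \<Rightarrow> nat) \<Rightarrow> bool" where
  "local_embedding l V E p \<longleftrightarrow> (\<forall>v\<in>V. card (pages_at E p v) \<le> l)"

definition is_cycle :: "'a set set \<Rightarrow> 'a list \<Rightarrow> bool" where
  "is_cycle F vs \<longleftrightarrow> length vs \<ge> 3 \<and> distinct vs \<and>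
     (\<forall>i < length vs. {vs ! i, vs ! ((i + 1) mod length vs)} \<in> F)"

definition forest :: "'a set set \<Rightarrow> bool" where
  "forest F \<longleftrightarrow> \<not> (\<exists>vs. is_cycle F vs)"

definition forest_embedding :: "'a set \<Rightarrow> 'a set set \<Rightarrow> 'a rel \<Rightarrow> ('a set \<Rightarrow> nat) \<Rightarrow> bool" where
  "forest_embedding V E R p \<longleftrightarrow> linear_embedding V E R p \<and>
     (\<forall>c. forest {e\<in>E. p e = c})"

definition induced_edges :: "'a set set \<Rightarrow> 'a set \<Rightarrow> 'a set set" where
  "induced_edges E X = {e\<in>E. e \<subseteq> X}"

definition graph_iso :: "'a set \<Rightarrow> 'a set set \<Rightarrow> 'b set \<Rightarrow> 'b set set \<Rightarrow> bool" where
  "graph_iso V E W F \<longleftrightarrow> (\<exists>f. bij_betw f V W \<and>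
     (\<forall>u\<in>V. \<forall>v\<in>V. {u, v} \<in> E \<longleftrightarrow> {f u, f v} \<in> F))"

definition contains_forest_embedding ::
  "'b set \<Rightarrow> 'b set set \<Rightarrow> 'b rel \<Rightarrow> ('b set \<Rightarrow> nat) \<Rightarrow> 'a set \<Rightarrow> 'a set set \<Rightarrow> bool" where
  "contains_forest_embedding W F R p V E \<longleftrightarrow>
     (\<exists>X \<subseteq> W. graph_iso V E X (induced_edges F X) \<and>
        forest_embedding X (induced_edges F X) (R \<inter> (X \<times> X)) p)"

end

theory Submission
  imports Defs
begin


lemma ktree_props:
  "ktree k V E \<Longrightarrow> finite V \<and> (\<forall>e\<in>E. \<exists>u v. e = {u,v} \<and> u \<noteq> v \<and> u \<in> V \<and> v \<in> V) \<and> card V \<ge> k + 1"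
proof (induction rule: ktree.induct)
  case (base V)
  then show ?case by auto
next
  case (step V E w C)
  have "\<forall>e\<in>E \<union> {{w, c} |c. c \<in> C}. \<exists>u v. e = {u,v} \<and> u \<noteq> v \<and> u \<in> insert w V \<and> v \<in> insert w V"
  proof
    fix e assume "e \<in> E \<union> {{w, c} |c. c \<in> C}"
    then show "\<exists>u v. e = {u,v} \<and> u \<noteq> v \<and> u \<in> insert w V \<and> v \<in> insert w V"
    proof
      assume "e \<in> E" then show ?thesis using step.IH by blast
    next
      assume "e \<in> {{w, c} |c. c \<in> C}"
      then obtain c where "e = {w,c}" "c \<in> C" by blast
      then show ?thesis using step.hyps by blast
    qed
  qed
  moreover have "finite (insert w V)" using step.IH by simp
  moreover have "k + 1 \<le> card (insert w V)"
  proof -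
    have "card (insert w V) = Suc (card V)" using step.IH step.hyps(2) by simp
    then show ?thesis using step.IH by linarith
  qed
  ultimately show ?case by (intro conjI)
qed

lemma ktree_fin: "ktree k V E \<Longrightarrow> finite V"
  using ktree_props by blast

lemma ktree_edge: "ktree k V E \<Longrightarrow> e \<in> E \<Longrightarrow> \<exists>u v. e = {u,v} \<and> u \<noteq> v \<and> u \<in> V \<and> v \<in> V"
proof -
  assume "ktree k V E" "e \<in> E"
  from conjunct1[OF conjunct2[OF ktree_props[OF this(1)]]] this(2)
  show ?thesis by (rule bspec)
qed

lemma ktree_edge_sub: "ktree k V E \<Longrightarrow> e \<in> E \<Longrightarrow> e \<subseteq> V"
proof -
  assume a: "ktree k V E" "e \<in> E"
  obtain u v where "e = {u,v}" "u \<in> V" "v \<in> V" using ktree_edge[OF a] by blast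
  then show ?thesis by simp
qed

lemma ktree_noloop: "ktree k V E \<Longrightarrow> {x} \<notin> E"
proof
  assume a: "ktree k V E" "{x} \<in> E"
  obtain u v where uv: "{x} = {u,v}" "u \<noteq> v" using ktree_edge[OF a] by blast
  have "u \<in> {x}" "v \<in> {x}" using uv(1) by auto
  then show False using uv(2) by simp
qed

lemma ktree_finE: "ktree k V E \<Longrightarrow> finite E"
proof -
  assume a: "ktree k V E"
  have "E \<subseteq> Pow V" using ktree_edge_sub[OF a] by blast
  then show ?thesis using ktree_fin[OF a] by (meson finite_Pow_iff finite_subset)
qed

definition clq :: "'a set set \<Rightarrow> 'a set \<Rightarrow> bool" where
  "clq F C \<longleftrightarrow> (\<forall>u\<in>C. \<forall>v\<in>C. u \<noteq> v \<longrightarrow> {u,v} \<in> F)"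

definition ext0 :: "nat set \<Rightarrow> nat set set \<Rightarrow> nat set \<Rightarrow> nat set set \<Rightarrow> bool" where
  "ext0 W F W' F' \<longleftrightarrow> W \<subseteq> W' \<and> F \<subseteq> F' \<and> (\<forall>x\<in>W. \<forall>y\<in>W. {x,y} \<in> F' \<longrightarrow> {x,y} \<in> F)"

definition children :: "nat \<Rightarrow> nat set \<Rightarrow> nat set \<Rightarrow> nat set set \<Rightarrow> nat set \<Rightarrow> nat set \<Rightarrow> bool" where
  "children N W W' F' C S \<longleftrightarrow> S \<subseteq> W' - W \<and> finite S \<and> card S = N \<and>
     (\<forall>s\<in>S. \<forall>x\<in>W. {s,x} \<in> F' \<longleftrightarrow> x \<in> C)"

definition ext_rel :: "nat \<Rightarrow> nat \<Rightarrow> nat set \<Rightarrow> nat set set \<Rightarrow> nat set \<Rightarrow> nat set set \<Rightarrow> bool" where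
  "ext_rel k N W F W' F' \<longleftrightarrow> ext0 W F W' F' \<and>
     (\<forall>C. C \<subseteq> W \<and> card C = k \<and> clq F C \<longrightarrow> (\<exists>S. children N W W' F' C S))"

lemma ext0_trans: "ext0 W F W1 F1 \<Longrightarrow> ext0 W1 F1 W2 F2 \<Longrightarrow> ext0 W F W2 F2"
  unfolding ext0_def by blast

lemma children_pres: "children N W W1 F1 C S \<Longrightarrow> ext0 W1 F1 W2 F2 \<Longrightarrow> W \<subseteq> W1 \<Longrightarrow> children N W W2 F2 C S"
  unfolding children_def ext0_def by blast

lemma add_N:
  assumes "ktree k W F" "C \<subseteq> W" "card C = k" "clq F C"
  shows "\<exists>W' F' S. ktree k W' F' \<and> ext0 W F W' F' \<and> children N W W' F' C S"
proof (induction N)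
  case 0
  show ?case
    apply (rule exI[of _ W], rule exI[of _ F], rule exI[of _ "{}"])
    using assms by (auto simp: ext0_def children_def)
next
  case (Suc N)
  then obtain W' F' S where h: "ktree k W' F'" "ext0 W F W' F'" "children N W W' F' C S" by blast
  have fin: "finite W'" using ktree_fin[OF h(1)] .
  obtain w :: nat where w: "w \<notin> W'" using ex_new_if_finite[OF infinite_UNIV_nat fin] by blast
  have CW': "C \<subseteq> W'" using assms(2) h(2) unfolding ext0_def by blast
  have clq': "\<forall>u\<in>C. \<forall>v\<in>C. u \<noteq> v \<longrightarrow> {u,v} \<in> F'" using assms(4) h(2) unfolding clq_def ext0_def by blast
  define F'' where "F'' = F' \<union> {{w, c} | c. c \<in> C}"
  have kt: "ktree k (insert w W') F''" unfolding F''_def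
    using ktree.step[OF h(1) w CW' assms(3) clq'] .
  have edges: "\<forall>e\<in>F'. e \<subseteq> W'" using ktree_edge_sub[OF h(1)] by blast
  have e0: "ext0 W' F' (insert w W') F''"
    unfolding ext0_def F''_def using w by (auto simp: doubleton_eq_iff)
  have ch: "children (Suc N) W (insert w W') F'' C (insert w S)"
  proof -
    have S: "S \<subseteq> W' - W" "finite S" "card S = N" "\<forall>s\<in>S. \<forall>x\<in>W. {s,x} \<in> F' \<longleftrightarrow> x \<in> C"
      using h(3) unfolding children_def by auto
    have WW': "W \<subseteq> W'" using h(2) unfolding ext0_def by blast
    have "w \<notin> S" using S(1) w by blast
    moreover have "\<forall>s\<in>S. \<forall>x\<in>W. {s,x} \<in> F'' \<longleftrightarrow> x \<in> C"
      using S(1,4) w WW' unfolding F''_def by (auto simp: doubleton_eq_iff)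
    moreover have "\<forall>x\<in>W. {w,x} \<in> F'' \<longleftrightarrow> x \<in> C"
    proof
      fix x assume "x \<in> W"
      have "{w,x} \<notin> F'" using edges w by blast
      then show "{w,x} \<in> F'' \<longleftrightarrow> x \<in> C" unfolding F''_def by (auto simp: doubleton_eq_iff)
    qed
    ultimately show ?thesis using S WW' w unfolding children_def by auto
  qed
  show ?case using kt ext0_trans[OF h(2) e0] ch by blast
qed

lemma add_all:
  assumes "finite Q"
  shows "ktree k W F \<Longrightarrow> (\<forall>C\<in>Q. C \<subseteq> W \<and> card C = k \<and> clq F C) \<Longrightarrow>
    \<exists>W' F'. ktree k W' F' \<and> ext0 W F W' F' \<and> (\<forall>C\<in>Q. \<exists>S. children N W W' F' C S)"
  using assms
proof (induction Q rule: finite_induct)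
  case empty
  then show ?case by (rule_tac x=W in exI, rule_tac x=F in exI) (auto simp: ext0_def)
next
  case (insert C Q)
  then obtain W1 F1 where h: "ktree k W1 F1" "ext0 W F W1 F1" "\<forall>C\<in>Q. \<exists>S. children N W W1 F1 C S"
    by auto
  have C: "C \<subseteq> W" "card C = k" "clq F C" using insert.prems by auto
  have C1: "C \<subseteq> W1" "clq F1 C" using C h(2) unfolding ext0_def clq_def by blast+
  obtain W2 F2 S where h2: "ktree k W2 F2" "ext0 W1 F1 W2 F2" "children N W1 W2 F2 C S"
    using add_N[OF h(1) C1(1) C(2) C1(2)] by blast
  have WW1: "W \<subseteq> W1" using h(2) unfolding ext0_def by blast
  have "children N W W2 F2 C S"
    using h2(3) WW1 unfolding children_def by blast
  moreover have "\<forall>C\<in>Q. \<exists>S. children N W W2 F2 C S"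
    using h(3) children_pres[OF _ h2(2) WW1] by blast
  ultimately show ?case using h2(1) ext0_trans[OF h(2) h2(2)] by blast
qed

lemma ext_exists:
  assumes "ktree k W F"
  shows "\<exists>W' F'. ktree k W' F' \<and> ext_rel k N W F W' F'"
proof -
  let ?Q = "{C. C \<subseteq> W \<and> card C = k \<and> clq F C}"
  have "finite W" using ktree_fin[OF assms] .
  then have "finite ?Q" by (rule finite_subset[rotated, OF finite_Pow_iff[THEN iffD2]]) auto
  from add_all[OF this assms, of N] show ?thesis unfolding ext_rel_def by auto
qed

primrec hh :: "nat \<Rightarrow> nat \<Rightarrow> nat \<Rightarrow> nat set \<times> nat set set" where
  "hh k N 0 = ({..k}, {e. \<exists>u v. e = {u,v} \<and> u \<noteq> v \<and> u \<in> {..k} \<and> v \<in> {..k}})"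
| "hh k N (Suc m) = (SOME x. ktree k (fst x) (snd x) \<and>
      ext_rel k N (fst (hh k N m)) (snd (hh k N m)) (fst x) (snd x))"

lemma hh_some:
  assumes "ktree k (fst (hh k N m)) (snd (hh k N m))"
  shows "ktree k (fst (hh k N (Suc m))) (snd (hh k N (Suc m))) \<and>
   ext_rel k N (fst (hh k N m)) (snd (hh k N m)) (fst (hh k N (Suc m))) (snd (hh k N (Suc m)))"
proof -
  let ?P = "\<lambda>x. ktree k (fst x) (snd x) \<and> ext_rel k N (fst (hh k N m)) (snd (hh k N m)) (fst x) (snd x)"
  from ext_exists[OF assms, of N] obtain W' F' where "?P (W',F')" by auto
  then have "\<exists>x. ?P x" by blast
  from someI_ex[OF this] show ?thesis by simp
qed

lemma hh_kt: "ktree k (fst (hh k N m)) (snd (hh k N m))"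
proof (induction m)
  case 0
  have "ktree k {..k} {e. \<exists>u v. e = {u,v} \<and> u \<noteq> v \<and> u \<in> {..k} \<and> v \<in> {..k}}"
    by (rule ktree.base) auto
  then show ?case by simp
next
  case (Suc m)
  then show ?case using hh_some by blast
qed

lemma hh_ext: "ext_rel k N (fst (hh k N m)) (snd (hh k N m)) (fst (hh k N (Suc m))) (snd (hh k N (Suc m)))"
  using hh_some[OF hh_kt] by blast

declare hh.simps(2)[simp del]



lemma cr: "trans R \<Longrightarrow> (a,b) \<in> R \<Longrightarrow> (b,c) \<in> R \<Longrightarrow> (c,d) \<in> R \<Longrightarrow> crossing R {a,c} {b,d}"
  unfolding crossing_def
  apply (rule exI[of _ a], rule exI[of _ c], rule exI[of _ b], rule exI[of _ d])
  by (meson transD)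

lemma k23_pair:
  assumes tr: "trans R" and irr: "irrefl R"
    and ncr: "\<forall>e\<in>F. \<forall>f\<in>F. p e = p f \<longrightarrow> \<not> crossing R e f"
    and c12: "(c1,c2) \<in> R" and ww: "(w,w') \<in> R"
    and ew: "{w,c1} \<in> F" "{w,c2} \<in> F" "p {w,c1} = q" "p {w,c2} = q"
    and ew': "{w',c1} \<in> F" "{w',c2} \<in> F" "p {w',c1} = q" "p {w',c2} = q"
    and loc: "((c1,w) \<in> R \<and> (w,c2) \<in> R \<and> (c1,w') \<in> R \<and> (w',c2) \<in> R) \<or>
              (((w,c1) \<in> R \<or> (c2,w) \<in> R) \<and> ((w',c1) \<in> R \<or> (c2,w') \<in> R))"
  shows False
proof -
  have ew2: "{c1,w} \<in> F" "{c2,w} \<in> F" "p {c1,w} = q" "p {c2,w} = q"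
    using ew by (auto simp: insert_commute)
  have ew2': "{c1,w'} \<in> F" "{c2,w'} \<in> F" "p {c1,w'} = q" "p {c2,w'} = q"
    using ew' by (auto simp: insert_commute)
  have irr': "\<And>x. (x,x) \<notin> R" using irr unfolding irrefl_def by blast
  have trr: "\<And>x y z. (x,y) \<in> R \<Longrightarrow> (y,z) \<in> R \<Longrightarrow> (x,z) \<in> R" using tr by (meson transD)
  from loc show False
  proof
    assume h: "(c1,w) \<in> R \<and> (w,c2) \<in> R \<and> (c1,w') \<in> R \<and> (w',c2) \<in> R"
    have "crossing R {c1,w'} {w,c2}" using cr[OF tr, of c1 w w' c2] h ww by blast
    then show False using ncr ew2' ew by metis
  next
    assume h: "((w,c1) \<in> R \<or> (c2,w) \<in> R) \<and> ((w',c1) \<in> R \<or> (c2,w') \<in> R)"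
    then consider "(w,c1) \<in> R" "(w',c1) \<in> R" | "(w,c1) \<in> R" "(c2,w') \<in> R"
      | "(c2,w) \<in> R" "(w',c1) \<in> R" | "(c2,w) \<in> R" "(c2,w') \<in> R" by blast
    then show False
    proof cases
      case 1
      have "crossing R {w,c1} {w',c2}" using cr[OF tr, of w w' c1 c2] 1 ww c12 by blast
      then show False using ncr ew ew' by metis
    next
      case 2
      have "crossing R {w,c2} {c1,w'}" using cr[OF tr, of w c1 c2 w'] 2 c12 by blast
      then show False using ncr ew ew2' by metis
    next
      case 3
      then show False using trr irr' ww c12 by meson
    next
      case 4
      have "crossing R {c1,w} {c2,w'}" using cr[OF tr, of c1 c2 w w'] 4 ww c12 by blast
      then show False using ncr ew2 ew2' by metis
    qed
  qed
qed

lemma k23_ord: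
  assumes tr: "trans R" and irr: "irrefl R" and tot: "total_on W R"
    and ncr: "\<forall>e\<in>F. \<forall>f\<in>F. p e = p f \<longrightarrow> \<not> crossing R e f"
    and c12: "(c1,c2) \<in> R"
    and ws: "w1 \<in> W" "w2 \<in> W" "w3 \<in> W" "w1 \<noteq> w2" "w1 \<noteq> w3" "w2 \<noteq> w3" "c1 \<in> W" "c2 \<in> W"
    and e: "\<forall>w\<in>{w1,w2,w3}. w \<noteq> c1 \<and> w \<noteq> c2 \<and> {w,c1} \<in> F \<and> {w,c2} \<in> F \<and> p {w,c1} = q \<and> p {w,c2} = q"
  shows False
proof -
  have irr': "\<And>x. (x,x) \<notin> R" using irr unfolding irrefl_def by blast
  have trr: "\<And>x y z. (x,y) \<in> R \<Longrightarrow> (y,z) \<in> R \<Longrightarrow> (x,z) \<in> R" using tr by (meson transD)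
  let ?ins = "\<lambda>w. (c1,w) \<in> R \<and> (w,c2) \<in> R"
  have out: "\<not> ?ins w \<Longrightarrow> (w,c1) \<in> R \<or> (c2,w) \<in> R" if "w \<in> {w1,w2,w3}" for w
  proof -
    have "w \<in> W" "w \<noteq> c1" "w \<noteq> c2" using that ws e by auto
    then show "\<not> ?ins w \<Longrightarrow> (w,c1) \<in> R \<or> (c2,w) \<in> R"
      using tot ws(7,8) unfolding total_on_def by blast
  qed
  have pair: False if "w \<in> {w1,w2,w3}" "w' \<in> {w1,w2,w3}" "w \<noteq> w'" "?ins w = ?ins w'" for w w'
  proof -
    have "w \<in> W" "w' \<in> W" using that ws by auto
    then have "(w,w') \<in> R \<or> (w',w) \<in> R" using tot that(3) unfolding total_on_def by blast
    moreover have ew: "{w,c1} \<in> F" "{w,c2} \<in> F" "p {w,c1} = q" "p {w,c2} = q"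
      using e that(1) by auto
    moreover have ew': "{w',c1} \<in> F" "{w',c2} \<in> F" "p {w',c1} = q" "p {w',c2} = q"
      using e that(2) by auto
    moreover have "(?ins w \<and> ?ins w') \<or> (((w,c1) \<in> R \<or> (c2,w) \<in> R) \<and> ((w',c1) \<in> R \<or> (c2,w') \<in> R))"
      using out[OF that(1)] out[OF that(2)] that(4) by blast
    ultimately show False
      using k23_pair[OF tr irr ncr c12, of w w' q] k23_pair[OF tr irr ncr c12, of w' w q] by blast
  qed
  show False
  proof (cases "?ins w1 = ?ins w2")
    case True then show ?thesis using pair[of w1 w2] ws by auto
  next
    case False
    then have "?ins w3 = ?ins w1 \<or> ?ins w3 = ?ins w2" by blast
    then show ?thesis using pair[of w3 w1] pair[of w3 w2] ws by auto
  qed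
qed

lemma k23:
  assumes "book_embedding W F R p" "c1 \<noteq> c2"
    "w1 \<in> W" "w2 \<in> W" "w3 \<in> W" "w1 \<noteq> w2" "w1 \<noteq> w3" "w2 \<noteq> w3" "c1 \<in> W" "c2 \<in> W"
    and e: "\<forall>w\<in>{w1,w2,w3}. w \<noteq> c1 \<and> w \<noteq> c2 \<and> {w,c1} \<in> F \<and> {w,c2} \<in> F \<and> p {w,c1} = q \<and> p {w,c2} = q"
  shows False
proof -
  have tr: "trans R" and irr: "irrefl R" and tot: "total_on W R"
    and ncr: "\<forall>e\<in>F. \<forall>f\<in>F. p e = p f \<longrightarrow> \<not> crossing R e f"
    using assms(1) unfolding book_embedding_def linear_embedding_def strict_linear_order_on_def by auto
  have "(c1,c2) \<in> R \<or> (c2,c1) \<in> R" using tot assms(2,9,10) unfolding total_on_def by blast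
  moreover have e': "\<forall>w\<in>{w1,w2,w3}. w \<noteq> c2 \<and> w \<noteq> c1 \<and> {w,c2} \<in> F \<and> {w,c1} \<in> F \<and> p {w,c2} = q \<and> p {w,c1} = q"
    using e by blast
  ultimately show False
    using k23_ord[OF tr irr tot ncr _ assms(3-10) e] k23_ord[OF tr irr tot ncr _ assms(3-8) assms(10,9) e']
    by blast
qed

definition forest_all :: "nat set set \<Rightarrow> (nat set \<Rightarrow> nat) \<Rightarrow> nat set \<Rightarrow> bool" where
  "forest_all F p X \<longleftrightarrow> (\<forall>q. forest {e\<in>induced_edges F X. p e = q})"

lemma forest_all_empty: "forest_all F p {}"
  unfolding forest_all_def forest_def is_cycle_def induced_edges_def
proof (intro allI notI)
  fix q assume "\<exists>vs. 3 \<le> length vs \<and> distinct vs \<and> (\<forall>i<length vs. {vs ! i, vs ! ((i + 1) mod length vs)} \<in> {e \<in> {e \<in> F. e \<subseteq> {}}. p e = q})"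
  then obtain vs where l3: "3 \<le> length vs" and al: "\<forall>i<length vs. {vs ! i, vs ! ((i + 1) mod length vs)} \<in> {e \<in> {e \<in> F. e \<subseteq> {}}. p e = q}" by blast
  from l3 have "0 < length vs" by linarith
  from al[rule_format, OF this] have "{vs ! 0, vs ! ((0 + 1) mod length vs)} \<in> {e \<in> {e \<in> F. e \<subseteq> {}}. p e = q}" .
  then show False by auto
qed

lemma cyc_idx:
  fixes n i :: nat
  assumes n: "3 \<le> n" and i: "i < n"
  shows "(i+1) mod n < n \<and> (i+1) mod n \<noteq> i \<and> (i+n-1) mod n < n \<and> (i+n-1) mod n \<noteq> i \<and>
         ((i+n-1) mod n + 1) mod n = i \<and> (i+n-1) mod n \<noteq> (i+1) mod n"
proof -
  have lt: "(i+1) mod n < n" "(i+n-1) mod n < n" using n by simp_all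
  have hh: "((i+n-1) mod n + 1) mod n = i"
  proof -
    have "((i+n-1) mod n + 1) mod n = (i+n-1+1) mod n" by (rule mod_add_left_eq)
    also have "i+n-1+1 = i + n" using n by simp
    finally show ?thesis using i by simp
  qed
  consider "i = 0" | "i = n - 1" | "0 < i" "i < n - 1" using i by linarith
  then have "(i+1) mod n \<noteq> i \<and> (i+n-1) mod n \<noteq> i \<and> (i+n-1) mod n \<noteq> (i+1) mod n"
  proof cases
    case 1
    have a: "(i+1) mod n = 1" using 1 n by simp
    have b: "(i+n-1) mod n = n - 1" using 1 n by simp
    show ?thesis using a b 1 n by simp
  next
    case 2
    have a: "(i+1) mod n = 0" using 2 n by simp
    have e: "i+n-1 = (n-2) + n" using 2 n by simp
    have "(i+n-1) mod n = ((n-2) + n) mod n" by (simp only: e)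
    also have "\<dots> = (n-2) mod n" by (rule mod_add_self2)
    also have "\<dots> = n - 2" using n by simp
    finally have b: "(i+n-1) mod n = n - 2" .
    show ?thesis using a b 2 n by simp
  next
    case 3
    have a: "(i+1) mod n = i + 1" using 3 by simp
    have e: "i+n-1 = (i-1) + n" using 3 by simp
    have "(i+n-1) mod n = ((i-1) + n) mod n" by (simp only: e)
    also have "\<dots> = (i-1) mod n" by (rule mod_add_self2)
    also have "\<dots> = i - 1" using i by simp
    finally have b: "(i+n-1) mod n = i - 1" .
    show ?thesis using 3 by (simp only: a b) arith
  qed
  then show ?thesis using lt hh by blast
qed

lemma forest_ext:
  assumes fa: "forest_all F p X" and w: "w \<notin> X"
    and dp: "\<forall>x\<in>X. \<forall>y\<in>X. {w,x} \<in> F \<longrightarrow> {w,y} \<in> F \<longrightarrow> x \<noteq> y \<longrightarrow> p {w,x} \<noteq> p {w,y}"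
  shows "forest_all F p (insert w X)"
  unfolding forest_all_def forest_def
proof (intro allI notI)
  fix q assume "\<exists>vs. is_cycle {e \<in> induced_edges F (insert w X). p e = q} vs"
  then obtain vs where c: "is_cycle {e \<in> induced_edges F (insert w X). p e = q} vs" by blast
  let ?n = "length vs"
  have n3: "?n \<ge> 3" and dist: "distinct vs"
    and ed: "\<And>i. i < ?n \<Longrightarrow> {vs ! i, vs ! ((i + 1) mod ?n)} \<in> F \<and> {vs ! i, vs ! ((i + 1) mod ?n)} \<subseteq> insert w X \<and> p {vs ! i, vs ! ((i + 1) mod ?n)} = q"
    using c unfolding is_cycle_def induced_edges_def by auto
  show False
  proof (cases "w \<in> set vs")
    case False
    have "is_cycle {e \<in> induced_edges F X. p e = q} vs"
      unfolding is_cycle_def induced_edges_def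
    proof (intro conjI allI impI)
      fix i assume i: "i < ?n"
      have "(i + 1) mod ?n < ?n" using n3 by (intro mod_less_divisor) linarith
      then have "vs ! i \<in> set vs" "vs ! ((i + 1) mod ?n) \<in> set vs" using i by (auto simp del: mod_less_divisor)
      then have "vs ! i \<noteq> w" "vs ! ((i + 1) mod ?n) \<noteq> w" using False by auto
      then show "{vs ! i, vs ! ((i + 1) mod ?n)} \<in> {e \<in> {e \<in> F. e \<subseteq> X}. p e = q}"
        using ed[OF i] by auto
    qed (use n3 dist in auto)
    then show False using fa unfolding forest_all_def forest_def by blast
  next
    case True
    then obtain i where i: "i < ?n" "vs ! i = w" by (metis in_set_conv_nth)
    define j where "j = (i + 1) mod ?n"
    define h where "h = (i + ?n - 1) mod ?n"
    have ci: "j < ?n" "j \<noteq> i" "h < ?n" "h \<noteq> i" "(h + 1) mod ?n = i" "h \<noteq> j"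
      using cyc_idx[OF n3 i(1)] unfolding j_def h_def by auto
    have j: "j < ?n" "j \<noteq> i" using ci by auto
    have h: "h < ?n" "h \<noteq> i" "(h + 1) mod ?n = i" using ci by auto
    have hj: "h \<noteq> j" using ci by auto
    have ej: "{w, vs ! j} \<in> F" "{w, vs ! j} \<subseteq> insert w X" "p {w, vs ! j} = q"
      using ed[OF i(1)] i(2) unfolding j_def by auto
    have eh: "{vs ! h, w} \<in> F" "{vs ! h, w} \<subseteq> insert w X" "p {vs ! h, w} = q"
      using ed[OF h(1)] i(2) h(3) by auto
    have "vs ! j \<noteq> w" "vs ! h \<noteq> w" "vs ! j \<noteq> vs ! h"
      using dist i j h hj by (auto simp: nth_eq_iff_index_eq)
    then have "vs ! j \<in> X" "vs ! h \<in> X" using ej eh by auto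
    then show False using dp \<open>vs ! j \<noteq> vs ! h\<close> ej eh by (metis insert_commute)
  qed
qed



lemma ext0_refl: "ext0 W F W F" unfolding ext0_def by blast

locale setting =
  fixes k l N d :: nat and R :: "nat rel" and p :: "nat set \<Rightarrow> nat"
  assumes k1: "k \<ge> 1" and Ndef: "N = 2 * (k * k * (k * l)) + 1"
    and book: "book_embedding (fst (hh k N d)) (snd (hh k N d)) R p"
    and loc: "local_embedding l (fst (hh k N d)) (snd (hh k N d)) p"
begin

abbreviation WW where "WW m \<equiv> fst (hh k N m)"
abbreviation FF where "FF m \<equiv> snd (hh k N m)"

lemma mono: "m \<le> n \<Longrightarrow> ext0 (WW m) (FF m) (WW n) (FF n)"
proof (induction n)
  case 0 then show ?case using ext0_refl by simp
next
  case (Suc n)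
  show ?case
  proof (cases "m = Suc n")
    case True then show ?thesis using ext0_refl by simp
  next
    case False
    then have "ext0 (WW m) (FF m) (WW n) (FF n)" using Suc by simp
    moreover have "ext0 (WW n) (FF n) (WW (Suc n)) (FF (Suc n))"
      using hh_ext[of k N n] unfolding ext_rel_def by blast
    ultimately show ?thesis using ext0_trans by blast
  qed
qed

lemma sub: "m \<le> n \<Longrightarrow> WW m \<subseteq> WW n" using mono unfolding ext0_def by blast

lemma finFD: "finite (FF d)" using ktree_finE[OF hh_kt] .

lemma child:
  assumes md: "m < d" and C: "C \<subseteq> WW m" "card C = k" "clq (FF d) C"
  shows "\<exists>w. w \<in> WW (Suc m) \<and> w \<notin> WW m \<and> (\<forall>x\<in>WW m. {w,x} \<in> FF d \<longleftrightarrow> x \<in> C) \<and>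
     (\<forall>a\<in>C. \<forall>b\<in>C. a \<noteq> b \<longrightarrow> p {w,a} \<noteq> p {w,b})"
proof -
  have e1: "ext0 (WW m) (FF m) (WW d) (FF d)" using mono md by simp
  have e2: "ext0 (WW (Suc m)) (FF (Suc m)) (WW d) (FF d)" using mono md by simp
  have e3: "ext0 (WW m) (FF m) (WW (Suc m)) (FF (Suc m))" using mono by simp
  have "clq (FF m) C" using C e1 unfolding clq_def ext0_def by blast
  then obtain S where "children N (WW m) (WW (Suc m)) (FF (Suc m)) C S"
    using hh_ext[of k N m] C unfolding ext_rel_def by blast
  then have S: "S \<subseteq> WW (Suc m) - WW m" "finite S" "card S = N"
    "\<forall>s\<in>S. \<forall>x\<in>WW m. {s,x} \<in> FF (Suc m) \<longleftrightarrow> x \<in> C"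
    unfolding children_def by auto
  have S4: "\<forall>s\<in>S. \<forall>x\<in>WW m. {s,x} \<in> FF d \<longleftrightarrow> x \<in> C"
  proof (intro ballI)
    fix s x assume "s \<in> S" "x \<in> WW m"
    then have "s \<in> WW (Suc m)" "x \<in> WW (Suc m)" using S(1) e3 unfolding ext0_def by auto
    then have "{s,x} \<in> FF d \<longleftrightarrow> {s,x} \<in> FF (Suc m)" using e2 unfolding ext0_def by blast
    then show "{s,x} \<in> FF d \<longleftrightarrow> x \<in> C" using S(4) \<open>s \<in> S\<close> \<open>x \<in> WW m\<close> by blast
  qed
  show ?thesis
  proof (rule ccontr)
    assume na: "\<not> ?thesis"
    have bad: "\<exists>pr. fst pr \<in> C \<and> snd pr \<in> C \<and> fst pr \<noteq> snd pr \<and> p {s, fst pr} = p {s, snd pr}"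
      if "s \<in> S" for s
    proof -
      have s1: "s \<in> WW (Suc m)" "s \<notin> WW m" using S(1) that by auto
      have s2: "\<forall>x\<in>WW m. {s,x} \<in> FF d \<longleftrightarrow> x \<in> C" using S4 that by simp
      have "\<not> (\<forall>a\<in>C. \<forall>b\<in>C. a \<noteq> b \<longrightarrow> p {s,a} \<noteq> p {s,b})"
      proof
        assume H: "\<forall>a\<in>C. \<forall>b\<in>C. a \<noteq> b \<longrightarrow> p {s,a} \<noteq> p {s,b}"
        have "\<exists>w. w \<in> WW (Suc m) \<and> w \<notin> WW m \<and> (\<forall>x\<in>WW m. {w,x} \<in> FF d \<longleftrightarrow> x \<in> C) \<and>
          (\<forall>a\<in>C. \<forall>b\<in>C. a \<noteq> b \<longrightarrow> p {w,a} \<noteq> p {w,b})"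
          by (rule exI[of _ s], intro conjI s1 s2 H)
        with na show False by contradiction
      qed
      then obtain a b where "a \<in> C" "b \<in> C" "a \<noteq> b" "p {s,a} = p {s,b}"
        by blast
      then show ?thesis by (rule_tac x="(a,b)" in exI) auto
    qed
    define g1 where "g1 s = (SOME pr. fst pr \<in> C \<and> snd pr \<in> C \<and> fst pr \<noteq> snd pr \<and> p {s, fst pr} = p {s, snd pr})" for s
    have g1: "fst (g1 s) \<in> C \<and> snd (g1 s) \<in> C \<and> fst (g1 s) \<noteq> snd (g1 s) \<and> p {s, fst (g1 s)} = p {s, snd (g1 s)}"
      if "s \<in> S" for s
      unfolding g1_def by (rule someI_ex[OF bad[OF that]])
    define G where "G s = (fst (g1 s), snd (g1 s), p {s, fst (g1 s)})" for s
    define P where "P = (\<Union>c\<in>C. pages_at (FF d) p c)"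
    define T where "T = C \<times> C \<times> P"
    have finC: "finite C" using C(2) k1 by (metis card_ge_0_finite less_le_trans zero_less_one)
    have finP: "finite P" unfolding P_def pages_at_def using finC finFD by auto
    have finT: "finite T" unfolding T_def using finC finP by (intro finite_cartesian_product)
    have "WW m \<subseteq> WW d" using md by (intro sub) simp
    then have CW: "C \<subseteq> WW d" using C(1) by blast
    have "card P \<le> (\<Sum>c\<in>C. card (pages_at (FF d) p c))" unfolding P_def by (rule card_UN_le[OF finC])
    also have "\<dots> \<le> (\<Sum>c\<in>C. l)"
      using loc CW unfolding local_embedding_def by (intro sum_mono) auto
    also have "\<dots> = k * l" using C(2) by simp
    finally have cP: "card P \<le> k * l" .
    have cT: "card T \<le> k * k * (k * l)" unfolding T_def using C(2) cP
      by (simp add: card_cartesian_product)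
    have GT: "G s \<in> T" if "s \<in> S" for s
    proof -
      have a: "fst (g1 s) \<in> C" "snd (g1 s) \<in> C" using g1[OF that] by auto
      then have "{s, fst (g1 s)} \<in> FF d" using S4 that C(1) by blast
      then have "p {s, fst (g1 s)} \<in> pages_at (FF d) p (fst (g1 s))" unfolding pages_at_def by auto
      then show ?thesis unfolding G_def T_def P_def using a by auto
    qed
    have fib: "card {s\<in>S. G s = t} \<le> 2" if "t \<in> T" for t
    proof (rule ccontr)
      obtain a b q where t: "t = (a,b,q)" by (cases t) auto
      assume "\<not> card {s\<in>S. G s = t} \<le> 2"
      then have c3: "Suc 2 \<le> card {s\<in>S. G s = t}" by linarith
      obtain s1 B1 where B1: "{s\<in>S. G s = t} = insert s1 B1" "s1 \<notin> B1" "2 \<le> card B1"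
        using card_le_Suc_iff[THEN iffD1, OF c3] by blast
      have c2: "Suc 1 \<le> card B1" using B1(3) by simp
      obtain s2 B2 where B2: "B1 = insert s2 B2" "s2 \<notin> B2" "1 \<le> card B2"
        using card_le_Suc_iff[THEN iffD1, OF c2] by blast
      have c1: "Suc 0 \<le> card B2" using B2(3) by simp
      obtain s3 B3 where B3: "B2 = insert s3 B3" "s3 \<notin> B3"
        using card_le_Suc_iff[THEN iffD1, OF c1] by blast
      have mem: "s1 \<in> S \<and> G s1 = t" "s2 \<in> S \<and> G s2 = t" "s3 \<in> S \<and> G s3 = t"
        using B1(1) B2(1) B3(1) by blast+
      have ds: "s1 \<noteq> s2" "s1 \<noteq> s3" "s2 \<noteq> s3" using B1 B2 B3 by auto
      have props: "s \<in> WW d \<and> s \<noteq> a \<and> s \<noteq> b \<and> {s,a} \<in> FF d \<and> {s,b} \<in> FF d \<and> p {s,a} = q \<and> p {s,b} = q"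
        if "s \<in> S" "G s = t" for s
      proof -
        have gs: "fst (g1 s) = a" "snd (g1 s) = b" "p {s,a} = q" using that(2) t unfolding G_def by auto
        have ab: "a \<in> C" "b \<in> C" "p {s,a} = p {s,b}" using g1[OF that(1)] gs by auto
        have "s \<in> WW (Suc m)" "s \<notin> WW m" using S(1) that(1) by auto
        moreover have "WW (Suc m) \<subseteq> WW d" using md by (intro sub) simp
        ultimately show ?thesis using ab gs S4 that(1) C(1) by auto
      qed
      have ab: "a \<in> C" "b \<in> C" "a \<noteq> b" using g1[OF conjunct1[OF mem(1)]] conjunct2[OF mem(1)] t
        unfolding G_def by auto
      show False
        apply (rule k23[OF book ab(3), of s1 s2 s3 q])
        using props mem ds ab CW by auto
    qed
    have "S = (\<Union>t\<in>T. {s\<in>S. G s = t})" using GT by auto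
    then have "card S \<le> (\<Sum>t\<in>T. card {s\<in>S. G s = t})" using card_UN_le[OF finT] by metis
    also have "\<dots> \<le> (\<Sum>t\<in>T. 2)" using fib by (intro sum_mono) auto
    also have "\<dots> = 2 * card T" by simp
    also have "\<dots> \<le> 2 * (k * k * (k * l))" using cT by simp
    finally show False using S(3) Ndef by simp
  qed
qed

end



context setting
begin

lemma chain: "j \<le> k \<Longrightarrow> k < d \<Longrightarrow> \<exists>Y C. Y \<subseteq> C \<and> card Y = j \<and> C \<subseteq> WW j \<and> card C = k \<and>
   clq (FF d) C \<and> forest_all (FF d) p Y"
proof (induction j)
  case 0
  have e: "ext0 (WW 0) (FF 0) (WW d) (FF d)" by (rule mono) simp
  have "clq (FF 0) {..<k}" unfolding clq_def
  proof (intro ballI impI)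
    fix u v assume "u \<in> {..<k}" "v \<in> {..<k}" "u \<noteq> v"
    then show "{u,v} \<in> FF 0" unfolding hh.simps(1) snd_conv mem_Collect_eq
      by (intro exI[of _ u] exI[of _ v]) simp
  qed
  then have "clq (FF d) {..<k}" using e unfolding clq_def ext0_def by blast
  moreover have "{..<k} \<subseteq> WW 0" by auto
  ultimately show ?case using forest_all_empty
    by (rule_tac x="{}" in exI, rule_tac x="{..<k}" in exI) auto
next
  case (Suc j)
  then obtain Y C where h: "Y \<subseteq> C" "card Y = j" "C \<subseteq> WW j" "card C = k" "clq (FF d) C" "forest_all (FF d) p Y"
    by auto
  have jd: "j < d" using Suc by simp
  obtain w where w: "w \<in> WW (Suc j)" "w \<notin> WW j" "\<forall>x\<in>WW j. {w,x} \<in> FF d \<longleftrightarrow> x \<in> C"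
    "\<forall>a\<in>C. \<forall>b\<in>C. a \<noteq> b \<longrightarrow> p {w,a} \<noteq> p {w,b}"
    using child[OF jd h(3,4,5)] by blast
  have finC: "finite C" using h(4) k1 by (metis card_ge_0_finite less_le_trans zero_less_one)
  have "C - Y \<noteq> {}"
  proof
    assume "C - Y = {}"
    then have "C \<subseteq> Y" by blast
    then have "card C \<le> card Y" using finC h(1) by (meson card_mono finite_subset)
    then show False using h(2,4) Suc by simp
  qed
  then obtain c where c: "c \<in> C" "c \<notin> Y" by blast
  define Y' where "Y' = insert w Y"
  define C' where "C' = insert w (C - {c})"
  have wC: "w \<notin> C" using h(3) w(2) by blast
  have "Y' \<subseteq> C'" unfolding Y'_def C'_def using h(1) c by blast
  moreover have "card Y' = Suc j" unfolding Y'_def using h(1,2) wC finC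
    by (metis card_insert_disjoint finite_subset subsetD)
  moreover have "C' \<subseteq> WW (Suc j)"
  proof -
    have "WW j \<subseteq> WW (Suc j)" by (rule sub) simp
    then show ?thesis unfolding C'_def using h(3) w(1) by blast
  qed
  moreover have "card C' = k" unfolding C'_def using wC finC c h(4) k1 by simp
  moreover have "clq (FF d) C'"
    unfolding clq_def C'_def
  proof (intro ballI impI)
    fix u v assume uv: "u \<in> insert w (C - {c})" "v \<in> insert w (C - {c})" "u \<noteq> v"
    show "{u,v} \<in> FF d"
    proof (cases "u = w")
      case True
      then have "v \<in> C" "v \<in> WW j" using uv h(3) by auto
      then show ?thesis using w(3) True by blast
    next
      case False
      note uF = False
      show ?thesis
      proof (cases "v = w")
        case True
        then have "u \<in> C" "u \<in> WW j" using uv uF h(3) by auto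
        then show ?thesis using w(3) True by (metis insert_commute)
      next
        case False
        then show ?thesis using uv uF h(5) unfolding clq_def by auto
      qed
    qed
  qed
  moreover have "forest_all (FF d) p Y'"
    unfolding Y'_def
    apply (rule forest_ext[OF h(6)])
    using wC h(1) w(4) by blast+
  ultimately show ?case by blast
qed

lemma main:
  fixes V :: "'a set"
  shows "ktree k V E \<Longrightarrow> card V \<le> d \<Longrightarrow> \<exists>f X. bij_betw f V X \<and> X \<subseteq> WW (card V) \<and>
    (\<forall>u\<in>V. \<forall>v\<in>V. {u,v} \<in> E \<longleftrightarrow> {f u, f v} \<in> FF d) \<and> forest_all (FF d) p X"
proof (induction rule: ktree.induct)
  case (base V)
  have kd: "k < d" using base by simp
  obtain Y C where h: "Y \<subseteq> C" "card Y = k" "C \<subseteq> WW k" "card C = k" "clq (FF d) C" "forest_all (FF d) p Y"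
    using chain[OF le_refl kd] by blast
  have finC: "finite C" using h(4) k1 by (metis card_ge_0_finite less_le_trans zero_less_one)
  have YC: "Y = C" using card_subset_eq[OF finC h(1)] h(2,4) by simp
  obtain w where w: "w \<in> WW (Suc k)" "w \<notin> WW k" "\<forall>x\<in>WW k. {w,x} \<in> FF d \<longleftrightarrow> x \<in> C"
    "\<forall>a\<in>C. \<forall>b\<in>C. a \<noteq> b \<longrightarrow> p {w,a} \<noteq> p {w,b}"
    using child[OF kd h(3,4,5)] by blast
  define X where "X = insert w C"
  have wC: "w \<notin> C" using h(3) w(2) by blast
  have cX: "card X = card V" unfolding X_def using wC finC h(4) base by simp
  have finX: "finite X" unfolding X_def using finC by simp
  obtain f where f: "bij_betw f V X" using finite_same_card_bij[OF base(1) finX] cX by metis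
  have XW: "X \<subseteq> WW (card V)"
  proof -
    have "WW k \<subseteq> WW (Suc k)" by (rule sub) simp
    moreover have "card V = Suc k" using base(2) by simp
    ultimately show ?thesis unfolding X_def using h(3) w(1) by auto
  qed
  have clX: "clq (FF d) X"
    unfolding clq_def X_def
  proof (intro ballI impI)
    fix u v assume uv: "u \<in> insert w C" "v \<in> insert w C" "u \<noteq> v"
    show "{u,v} \<in> FF d"
    proof (cases "u = w")
      case True
      then have "v \<in> C" "v \<in> WW k" using uv h(3) by auto
      then show ?thesis using w(3) True by blast
    next
      case False
      note uF = False
      show ?thesis
      proof (cases "v = w")
        case True
        then have "u \<in> C" "u \<in> WW k" using uv uF h(3) by auto
        then show ?thesis using w(3) True by (metis insert_commute)
      next
        case False
        then show ?thesis using uv uF h(5) unfolding clq_def by auto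
      qed
    qed
  qed
  have noloop: "{x} \<notin> FF d" for x
    using ktree_noloop[OF hh_kt[of k N d]] .
  have iso: "\<forall>u\<in>V. \<forall>v\<in>V. {u,v} \<in> {e. \<exists>u v. e = {u, v} \<and> u \<noteq> v \<and> u \<in> V \<and> v \<in> V} \<longleftrightarrow> {f u, f v} \<in> FF d"
  proof (intro ballI)
    fix u v assume uv: "u \<in> V" "v \<in> V"
    have fuv: "f u \<in> X" "f v \<in> X" using f uv by (auto simp: bij_betw_def)
    have "f u = f v \<longleftrightarrow> u = v" using f uv by (auto simp: bij_betw_def inj_on_def)
    moreover have "{u,v} \<in> {e. \<exists>u v. e = {u, v} \<and> u \<noteq> v \<and> u \<in> V \<and> v \<in> V} \<longleftrightarrow> u \<noteq> v"
      using uv by (auto simp: doubleton_eq_iff)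
    moreover have "{f u, f v} \<in> FF d \<longleftrightarrow> f u \<noteq> f v"
      using clX fuv noloop unfolding clq_def by (metis insert_absorb2)
    ultimately show "{u,v} \<in> {e. \<exists>u v. e = {u, v} \<and> u \<noteq> v \<and> u \<in> V \<and> v \<in> V} \<longleftrightarrow> {f u, f v} \<in> FF d"
      by blast
  qed
  have "forest_all (FF d) p X"
    unfolding X_def
    apply (rule forest_ext[OF h(6)[unfolded YC]])
    using wC w(4) by blast+
  then show ?case using f XW iso by blast
next
  case (step V E w C)
  have cV: "card (insert w V) = Suc (card V)" using step ktree_fin[OF step(1)] by simp
  then have md: "card V < d" using step by simp
  obtain f X where IH: "bij_betw f V X" "X \<subseteq> WW (card V)" "\<forall>u\<in>V. \<forall>v\<in>V. {u,v} \<in> E \<longleftrightarrow> {f u, f v} \<in> FF d"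
    "forest_all (FF d) p X"
    using step md by auto
  have injf: "inj_on f V" and fV: "f ` V = X" using IH(1) by (auto simp: bij_betw_def)
  have fC: "f ` C \<subseteq> WW (card V)" using IH(2) fV step(3) by blast
  have cfC: "card (f ` C) = k" using card_image[OF inj_on_subset[OF injf step(3)]] step(4) by simp
  have clfC: "clq (FF d) (f ` C)"
    unfolding clq_def
  proof (intro ballI impI)
    fix a b assume ab: "a \<in> f ` C" "b \<in> f ` C" "a \<noteq> b"
    then obtain u v where uv: "u \<in> C" "v \<in> C" "a = f u" "b = f v" by blast
    then have "u \<noteq> v" using ab(3) by blast
    then have "{u,v} \<in> E" using step(5) uv(1,2) by blast
    moreover have "u \<in> V" "v \<in> V" using uv(1,2) step(3) by auto
    ultimately show "{a,b} \<in> FF d" using IH(3) uv(3,4) by blast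
  qed
  obtain w' where w': "w' \<in> WW (Suc (card V))" "w' \<notin> WW (card V)"
    "\<forall>x\<in>WW (card V). {w',x} \<in> FF d \<longleftrightarrow> x \<in> f ` C"
    "\<forall>a\<in>f ` C. \<forall>b\<in>f ` C. a \<noteq> b \<longrightarrow> p {w',a} \<noteq> p {w',b}"
    using child[OF md fC cfC clfC] by blast
  define f' where "f' = f(w := w')"
  have w'X: "w' \<notin> X" using IH(2) w'(2) by blast
  have f'V: "\<forall>v\<in>V. f' v = f v" unfolding f'_def using step(2) by auto
  have f'w: "f' w = w'" unfolding f'_def by simp
  have bij: "bij_betw f' (insert w V) (insert w' X)"
  proof -
    have "inj_on f' V = inj_on f V" by (rule inj_on_cong) (simp add: f'V)
    then have i1: "inj_on f' V" using injf by simp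
    have "f' ` V = f ` V" by (rule image_cong) (simp_all add: f'V)
    then have i2: "f' ` V = X" using fV by simp
    have "w \<notin> V" by (rule step(2))
    then have i3: "V - {w} = V" by simp
    have "inj_on f' (insert w V)" unfolding inj_on_insert i3 i2 f'w using i1 w'X by simp
    moreover have "f' ` insert w V = insert w' X" using i2 f'w by simp
    ultimately show ?thesis unfolding bij_betw_def by simp
  qed
  have XW: "insert w' X \<subseteq> WW (card (insert w V))"
  proof -
    have "WW (card V) \<subseteq> WW (Suc (card V))" by (rule sub) simp
    then show ?thesis using cV w'(1) IH(2) by auto
  qed
  have Eedge: "\<forall>e\<in>E. e \<subseteq> V" using ktree_edge_sub[OF step(1)] by blast
  have noloop: "{x} \<notin> FF d" for x
    using ktree_noloop[OF hh_kt[of k N d]] .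
  have Xw: "x \<in> X \<Longrightarrow> {w',x} \<in> FF d \<longleftrightarrow> x \<in> f ` C" for x using w'(3) IH(2) by blast
  have key: "v \<in> V \<Longrightarrow> {w,v} \<in> E \<union> {{w, c} |c. c \<in> C} \<longleftrightarrow> {w', f v} \<in> FF d" for v
  proof -
    assume v: "v \<in> V"
    have "{w,v} \<notin> E" using Eedge step(2) by blast
    then have "{w,v} \<in> E \<union> {{w, c} |c. c \<in> C} \<longleftrightarrow> v \<in> C"
      using v step(2) by (auto simp: doubleton_eq_iff)
    moreover have "f v \<in> f ` C \<longleftrightarrow> v \<in> C" using injf v step(3) by (auto simp: inj_on_def)
    moreover have "f v \<in> X" using fV v by blast
    ultimately show ?thesis using Xw by blast
  qed
  have iso: "\<forall>u\<in>insert w V. \<forall>v\<in>insert w V. {u,v} \<in> E \<union> {{w, c} |c. c \<in> C} \<longleftrightarrow> {f' u, f' v} \<in> FF d"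
  proof (intro ballI)
    fix u v assume u: "u \<in> insert w V" and v: "v \<in> insert w V"
    show "{u,v} \<in> E \<union> {{w, c} |c. c \<in> C} \<longleftrightarrow> {f' u, f' v} \<in> FF d"
    proof (cases "u = w")
      case True
      note uw = True
      show ?thesis
      proof (cases "v = w")
        case True
        have "{w} \<notin> E" using Eedge step(2) by blast
        moreover have "{w} \<notin> {{w, c} |c. c \<in> C}" using step(2,3) by (auto simp: doubleton_eq_iff)
        ultimately show ?thesis using uw True noloop by auto
      next
        case False
        then have "v \<in> V" using v by simp
        then show ?thesis using key[of v] uw f'V f'w by simp
      qed
    next
      case False
      then have uV: "u \<in> V" using u by simp
      show ?thesis
      proof (cases "v = w")
        case True
        then show ?thesis using key[OF uV] f'V f'w uV by (simp add: insert_commute)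
      next
        case False
        then have vV: "v \<in> V" using v by simp
        have "{u,v} \<notin> {{w, c} |c. c \<in> C}" using uV vV step(2) by (auto simp: doubleton_eq_iff)
        then have "{u,v} \<in> E \<union> {{w, c} |c. c \<in> C} \<longleftrightarrow> {u,v} \<in> E" by blast
        moreover have "f' u = f u" "f' v = f v" using f'V uV vV by auto
        ultimately show ?thesis using IH(3) uV vV by simp
      qed
    qed
  qed
  have "forest_all (FF d) p (insert w' X)"
    apply (rule forest_ext[OF IH(4) w'X])
    using Xw w'(4) by blast
  then show ?case using bij XW iso by blast
qed

end


theorem lemma2:
  fixes k l :: nat and V :: "'a set" and E :: "'a set set"
  assumes "k \<ge> 1" and "ktree k V E"
  shows "\<exists>(W :: nat set) (F :: nat set set). ktree k W F \<and>
           (\<forall>R p. book_embedding W F R p \<and> local_embedding l W F p \<longrightarrow>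
                  contains_forest_embedding W F R p V E)"
proof -
  define N where "N = 2 * (k * k * (k * l)) + 1"
  define d where "d = card V"
  show ?thesis
  proof (rule exI[of _ "fst (hh k N d)"], rule exI[of _ "snd (hh k N d)"], intro conjI allI impI)
    show "ktree k (fst (hh k N d)) (snd (hh k N d))" by (rule hh_kt)
  next
    fix R p assume a: "book_embedding (fst (hh k N d)) (snd (hh k N d)) R p \<and>
        local_embedding l (fst (hh k N d)) (snd (hh k N d)) p"
    interpret setting k l N d R p
      using assms(1) a N_def by unfold_locales auto
    obtain f X where h: "bij_betw f V X" "X \<subseteq> WW (card V)"
      "\<forall>u\<in>V. \<forall>v\<in>V. {u,v} \<in> E \<longleftrightarrow> {f u, f v} \<in> FF d" "forest_all (FF d) p X"
      using main[OF assms(2)] d_def by auto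
    have XW: "X \<subseteq> WW d" using h(2) d_def by simp
    have iso: "graph_iso V E X (induced_edges (FF d) X)"
      unfolding graph_iso_def
    proof (rule exI[of _ f], intro conjI ballI)
      show "bij_betw f V X" by (rule h(1))
    next
      fix u v assume "u \<in> V" "v \<in> V"
      then have "f u \<in> X" "f v \<in> X" using h(1) by (auto simp: bij_betw_def)
      then show "{u,v} \<in> E \<longleftrightarrow> {f u, f v} \<in> induced_edges (FF d) X"
        using h(3) \<open>u \<in> V\<close> \<open>v \<in> V\<close> unfolding induced_edges_def by auto
    qed
    have slo: "strict_linear_order_on (WW d) R" using a unfolding book_embedding_def linear_embedding_def by blast
    have "strict_linear_order_on X (R \<inter> X \<times> X)"
      using slo XW unfolding strict_linear_order_on_def trans_def irrefl_def total_on_def by blast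
    then have "forest_embedding X (induced_edges (FF d) X) (R \<inter> X \<times> X) p"
      using h(4) unfolding forest_embedding_def linear_embedding_def forest_all_def by blast
    then show "contains_forest_embedding (fst (hh k N d)) (snd (hh k N d)) R p V E"
      unfolding contains_forest_embedding_def using XW iso by blast
  qed
qed


end
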